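(* Let $(X,d)$ be a bounded metric space and let $M: X\to\mathbb{R}$ satisfy $d(x,y)\le M(x)\le d(x,z)+M(z)$ for all $x,y,z\in X$. Let $d_S$ be the subset distance on $\mathcal{F}(X)$ defined in the context. Suppose $X_1,X_2\in\mathcal{F}(X)$ with $|X_1|\le|X_2|$. Then for any $b\in X$, $d_S(X_1,X_2)\le d_S(X_1,X_2\cup\{b\})$.
   Context: $\mathcal{F}(X)$ denotes the set of all finite subsets of $X$. For $A,B\in\mathcal{F}(X)$ with $|A|\le|B|$ and an injection $\chi:A\to B$, define $d_\chi(A,B)=\sum_{x\in A} d(x,\chi(x))+\sum_{y\in B\setminus\chi(A)} M(y)$. The subset distance is $d_S(A,B)=d_S(B,A)=\min\{d_\chi(A,B) : \chi:A\to B \text{ an injection}\}$ (for $|A|\le|B|$). *)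

theory Defs
  imports "HOL-Analysis.Analysis"
begin

definition inj_cost :: "('a \<Rightarrow> 'a \<Rightarrow> real) \<Rightarrow> ('a \<Rightarrow> real) \<Rightarrow> 'a set \<Rightarrow> 'a set \<Rightarrow> ('a \<Rightarrow> 'a) \<Rightarrow> real" where
  "inj_cost d M A B chi = (\<Sum>x\<in>A. d x (chi x)) + (\<Sum>y\<in>B - chi ` A. M y)"

definition subset_dist :: "('a \<Rightarrow> 'a \<Rightarrow> real) \<Rightarrow> ('a \<Rightarrow> real) \<Rightarrow> 'a set \<Rightarrow> 'a set \<Rightarrow> real" where
  "subset_dist d M A B =
     (if card A \<le> card B
      then Min {inj_cost d M A B chi | chi. inj_on chi A \<and> chi ` A \<subseteq> B}
      else Min {inj_cost d M B A chi | chi. inj_on chi B \<and> chi ` B \<subseteq> A})"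

end

theory Submission
  imports Defs "HOL-Library.FuncSet"
begin

lemma cost_set_finite:
  assumes "finite A" "finite B"
  shows "finite {inj_cost d M A B chi | chi. inj_on chi A \<and> chi ` A \<subseteq> B}"
proof -
  have "{inj_cost d M A B chi | chi. inj_on chi A \<and> chi ` A \<subseteq> B}
        \<subseteq> (\<lambda>chi. inj_cost d M A B chi) ` (A \<rightarrow>\<^sub>E B)"
  proof
    fix c assume "c \<in> {inj_cost d M A B chi | chi. inj_on chi A \<and> chi ` A \<subseteq> B}"
    then obtain chi where c: "c = inj_cost d M A B chi" and s: "chi ` A \<subseteq> B" by blast
    have "inj_cost d M A B chi = inj_cost d M A B (restrict chi A)"
    proof -
      have "(\<Sum>x\<in>A. d x (chi x)) = (\<Sum>x\<in>A. d x (restrict chi A x))"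
        by (rule sum.cong) auto
      then show ?thesis unfolding inj_cost_def by simp
    qed
    moreover have "restrict chi A \<in> A \<rightarrow>\<^sub>E B" using s by auto
    ultimately show "c \<in> (\<lambda>chi. inj_cost d M A B chi) ` (A \<rightarrow>\<^sub>E B)" using c by blast
  qed
  moreover have "finite (A \<rightarrow>\<^sub>E B)" using assms by (simp add: finite_PiE)
  ultimately show ?thesis using finite_subset finite_imageI by blast
qed

lemma cost_set_ne:
  assumes "finite A" "finite B" "card A \<le> card B"
  shows "{inj_cost d M A B chi | chi. inj_on chi A \<and> chi ` A \<subseteq> B} \<noteq> {}"
proof -
  obtain f where "f ` A \<subseteq> B" "inj_on f A" using card_le_inj[OF assms] by blast
  then have "inj_cost d M A B f \<in> {inj_cost d M A B chi | chi. inj_on chi A \<and> chi ` A \<subseteq> B}"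
    by (intro CollectI exI[of _ f]) simp
  then show ?thesis by (metis empty_iff)
qed

theorem lemma2p3:
  fixes X :: "'a set" and d :: "'a \<Rightarrow> 'a \<Rightarrow> real" and M :: "'a \<Rightarrow> real"
    and X1 X2 :: "'a set" and b :: 'a
  assumes "Metric_space X d"
    and "Metric_space.mbounded X d X"
    and "\<And>x y z. x \<in> X \<Longrightarrow> y \<in> X \<Longrightarrow> z \<in> X \<Longrightarrow> d x y \<le> M x \<and> M x \<le> d x z + M z"
    and "finite X1" and "X1 \<subseteq> X" and "finite X2" and "X2 \<subseteq> X"
    and "card X1 \<le> card X2"
    and "b \<in> X"
  shows "subset_dist d M X1 X2 \<le> subset_dist d M X1 (X2 \<union> {b})"
proof (cases "b \<in> X2")
  case True
  then have "X2 \<union> {b} = X2" by blast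
  then show ?thesis by simp
next
  case False
  note ms = assms(1)
  let ?S1 = "{inj_cost d M X1 X2 chi | chi. inj_on chi X1 \<and> chi ` X1 \<subseteq> X2}"
  let ?S2 = "{inj_cost d M X1 (X2 \<union> {b}) chi | chi. inj_on chi X1 \<and> chi ` X1 \<subseteq> X2 \<union> {b}}"
  have fin2: "finite (X2 \<union> {b})" using assms by simp
  have c2: "card (X2 \<union> {b}) = Suc (card X2)" using False assms(6) by simp
  have L: "subset_dist d M X1 X2 = Min ?S1" using assms(8) unfolding subset_dist_def by simp
  have R: "subset_dist d M X1 (X2 \<union> {b}) = Min ?S2" using assms(8) c2 unfolding subset_dist_def by simp
  have "Min ?S2 \<in> ?S2"
    by (rule Min_in[OF cost_set_finite[OF assms(4) fin2] cost_set_ne[OF assms(4) fin2]]) (use assms(8) c2 in simp)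
  then obtain chi where chi: "inj_on chi X1" "chi ` X1 \<subseteq> X2 \<union> {b}"
     and mc: "Min ?S2 = inj_cost d M X1 (X2 \<union> {b}) chi" by auto
  have fS1: "finite ?S1" by (rule cost_set_finite[OF assms(4) assms(6)])
  have key: "\<exists>chi'. inj_on chi' X1 \<and> chi' ` X1 \<subseteq> X2 \<and>
      inj_cost d M X1 X2 chi' \<le> inj_cost d M X1 (X2 \<union> {b}) chi"
  proof (cases "b \<in> chi ` X1")
    case False2: False
    have sub: "chi ` X1 \<subseteq> X2" using chi(2) False2 by blast
    have "(X2 \<union> {b}) - chi ` X1 = insert b (X2 - chi ` X1)" using False2 by blast
    then have "(\<Sum>y\<in>(X2 \<union> {b}) - chi ` X1. M y) = M b + (\<Sum>y\<in>X2 - chi ` X1. M y)"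
      using False assms(6) by simp
    moreover have "M b \<ge> 0"
      using assms(3)[of b b b] assms(9) Metric_space.mdist_zero[OF ms] by auto
    ultimately have "inj_cost d M X1 X2 chi \<le> inj_cost d M X1 (X2 \<union> {b}) chi"
      unfolding inj_cost_def by simp
    then show ?thesis using chi(1) sub by blast
  next
    case True2: True
    then obtain a where a: "a \<in> X1" "chi a = b" by blast
    have oth: "chi x \<in> X2" if "x \<in> X1" "x \<noteq> a" for x
    proof -
      have "chi x \<noteq> b" using chi(1) a that unfolding inj_on_def by blast
      then show ?thesis using chi(2) that by blast
    qed
    have "card (chi ` X1) = card X1" using chi(1) by (simp add: card_image)
    have "chi ` X1 - {b} \<subseteq> X2" using chi(2) by blast
    have "card (chi ` X1 - {b}) < card X2"
    proof -
      have "card (chi ` X1 - {b}) = card X1 - 1"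
        using card_Diff_singleton[OF True2] \<open>card (chi ` X1) = card X1\<close> by simp
      moreover have "card X1 > 0" using a assms(4) card_gt_0_iff by blast
      ultimately show ?thesis using assms(8) by linarith
    qed
    have "\<not> X2 \<subseteq> chi ` X1 - {b}"
    proof
      assume "X2 \<subseteq> chi ` X1 - {b}"
      then have "card X2 \<le> card (chi ` X1 - {b})" using assms(4) by (intro card_mono) auto
      then show False using \<open>card (chi ` X1 - {b}) < card X2\<close> by linarith
    qed
    then obtain y where y: "y \<in> X2" "y \<notin> chi ` X1" using False by blast
    define chi' where "chi' = chi(a := y)"
    have inj': "inj_on chi' X1" unfolding chi'_def by (rule inj_on_fun_updI[OF chi(1) y(2)])
    have img: "chi' ` X1 = insert y (chi ` (X1 - {a}))" unfolding chi'_def using a(1)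
      by (simp add: fun_upd_image set_diff_eq Collect_conj_eq)
    have sub': "chi' ` X1 \<subseteq> X2" using img y(1) oth by auto
    have chiimg: "chi ` X1 = insert b (chi ` (X1 - {a}))" using a by blast
    have e1: "X2 - chi' ` X1 = (X2 - chi ` X1) - {y}" unfolding img chiimg using False by auto
    have e2: "(X2 \<union> {b}) - chi ` X1 = X2 - chi ` X1" using True2 by blast
    have fX: "finite (X2 - chi ` X1)" using assms(6) by simp
    have s1: "(\<Sum>y\<in>X2 - chi ` X1. M y) = M y + (\<Sum>y\<in>X2 - chi' ` X1. M y)"
      unfolding e1 by (rule sum.remove[OF fX]) (use y in blast)
    have d1: "(\<Sum>x\<in>X1. d x (chi' x)) = d a y + (\<Sum>x\<in>X1 - {a}. d x (chi x))"
    proof -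
      have "(\<Sum>x\<in>X1. d x (chi' x)) = d a (chi' a) + (\<Sum>x\<in>X1 - {a}. d x (chi' x))"
        by (rule sum.remove[OF assms(4) a(1)])
      moreover have "(\<Sum>x\<in>X1 - {a}. d x (chi' x)) = (\<Sum>x\<in>X1 - {a}. d x (chi x))"
        by (rule sum.cong) (auto simp: chi'_def)
      ultimately show ?thesis by (simp add: chi'_def)
    qed
    have d2: "(\<Sum>x\<in>X1. d x (chi x)) = d a b + (\<Sum>x\<in>X1 - {a}. d x (chi x))"
      using sum.remove[OF assms(4) a(1), of "\<lambda>x. d x (chi x)"] a(2) by (simp only:)
    have aX: "a \<in> X" and yX: "y \<in> X" using a(1) assms(5) y(1) assms(7) by auto
    have "d a y \<le> d a b + d b y" using Metric_space.triangle[OF ms aX assms(9) yX] .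
    moreover have "d b y = d y b" using Metric_space.commute[OF ms] by simp
    moreover have "d y b \<le> M y" using assms(3)[OF yX assms(9) yX] by simp
    ultimately have "d a y \<le> d a b + M y" by linarith
    then have "inj_cost d M X1 X2 chi' \<le> inj_cost d M X1 (X2 \<union> {b}) chi"
      unfolding inj_cost_def e2 d1 d2 using s1 by linarith
    then show ?thesis using inj' sub' by blast
  qed
  then obtain chi' where c1: "inj_on chi' X1" and c2': "chi' ` X1 \<subseteq> X2"
     and le: "inj_cost d M X1 X2 chi' \<le> inj_cost d M X1 (X2 \<union> {b}) chi" by blast
  have "inj_cost d M X1 X2 chi' \<in> ?S1"
    by (rule CollectI, rule exI[of _ chi']) (simp add: c1 c2')
  then have "Min ?S1 \<le> inj_cost d M X1 X2 chi'" by (rule Min_le[OF fS1])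
  then show ?thesis using L R mc le by linarith
qed

end
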